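(* Let $G=\{\alpha_t: t\in\mathbb{N}\}$ be a subgroup of $\mathbb{T}$ and let $(M_t)_{t\in\mathbb{N}}$ be a sequence of positive integers. Then there exists a sequence $(V_t)_{t\in\mathbb{N}}$ of open subsets of $\mathbb{T}$ such that (i) $V_t\supseteq\langle\alpha_1,\ldots,\alpha_t\rangle_{M_t}$ for all $t\in\mathbb{N}$, and (ii) $\bigcup_{k\in\mathbb{N}}\bigcap_{t\ge k}V_t = G$.
   Context: $\mathbb{T}=\mathbb{R}/\mathbb{Z}$. For $M\in\mathbb{N}$, $\langle\alpha_1,\ldots,\alpha_t\rangle_M=\{k_1\alpha_1+\cdots+k_t\alpha_t: k_i\in\mathbb{Z},\ |k_1|,\ldots,|k_t|\le M\}$. *)

theory Defs
  imports "HOL-Analysis.Analysis"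
begin

text \<open>The torus T = R/Z is represented through the quotient map R -> R/Z:
  a subset of T is represented by its (Z-periodic) preimage in R.
  A subset U of T is open iff its preimage is open (quotient topology);
  a subset of T is a subgroup iff its preimage is an additive subgroup of R.\<close>

definition zperiodic :: "real set \<Rightarrow> bool" where
  "zperiodic S \<longleftrightarrow> (\<forall>x\<in>S. \<forall>n\<in>\<int>. x + n \<in> S)"

definition real_add_subgroup :: "real set \<Rightarrow> bool" where
  "real_add_subgroup H \<longleftrightarrow> 0 \<in> H \<and> (\<forall>x\<in>H. \<forall>y\<in>H. x + y \<in> H \<and> - x \<in> H)"

text \<open>Preimage in R of the subset {alpha_t : t >= 1} of T.\<close>
definition torus_set :: "(nat \<Rightarrow> real) \<Rightarrow> real set" where
  "torus_set \<alpha> = {x. \<exists>t\<ge>1. x - \<alpha> t \<in> \<int>}"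

text \<open>Preimage in R of the set <alpha_1,...,alpha_t>_M of T.\<close>
definition bounded_span :: "(nat \<Rightarrow> real) \<Rightarrow> nat \<Rightarrow> nat \<Rightarrow> real set" where
  "bounded_span \<alpha> t M = {x. \<exists>k::nat \<Rightarrow> int. (\<forall>i\<in>{1..t}. \<bar>k i\<bar> \<le> int M) \<and>
       x - (\<Sum>i=1..t. of_int (k i) * \<alpha> i) \<in> \<int>}"

end

theory Submission
  imports Defs
begin

lemma int_sep1:
  fixes d :: real
  shows "\<exists>\<delta>>0. \<forall>z\<in>\<int>. d + z \<noteq> 0 \<longrightarrow> \<delta> \<le> \<bar>d + z\<bar>"
proof (cases "d \<in> \<int>")
  case True
  show ?thesis
  proof (intro exI[of _ 1] conjI ballI impI)
    fix z :: real assume z: "z \<in> \<int>" "d + z \<noteq> 0"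
    then have "d + z \<in> \<int>" using True by simp
    then obtain m where m: "d + z = of_int m" by (auto elim: Ints_cases)
    with z have "m \<noteq> 0" by auto
    then show "1 \<le> \<bar>d + z\<bar>" using m by linarith
  qed simp
next
  case False
  then have f: "frac d > 0" by simp
  have f1: "frac d < 1" by (rule frac_lt_1)
  show ?thesis
  proof (intro exI[of _ "min (frac d) (1 - frac d)"] conjI ballI impI)
    show "0 < min (frac d) (1 - frac d)" using f f1 by simp
    fix z :: real assume z: "z \<in> \<int>" "d + z \<noteq> 0"
    then obtain n where n: "z = of_int n" by (auto elim: Ints_cases)
    have e: "d + z = frac d + of_int (floor d + n)" unfolding frac_def n by simp
    show "min (frac d) (1 - frac d) \<le> \<bar>d + z\<bar>"
    proof (cases "floor d + n \<ge> 0")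
      case True then show ?thesis using e f by simp
    next
      case False then have "of_int (floor d + n) \<le> (-1::real)" by linarith
      then show ?thesis using e f f1 by simp
    qed
  qed
qed

lemma int_sep:
  fixes D :: "real set"
  assumes "finite D"
  shows "\<exists>\<delta>>0. \<forall>d\<in>D. \<forall>z\<in>\<int>. d + z \<noteq> 0 \<longrightarrow> \<delta> \<le> \<bar>d + z\<bar>"
  using assms
proof (induction D rule: finite_induct)
  case empty then show ?case by (intro exI[of _ 1]) simp
next
  case (insert d D)
  then obtain \<delta>1 where d1: "\<delta>1 > 0" "\<forall>d\<in>D. \<forall>z\<in>\<int>. d + z \<noteq> 0 \<longrightarrow> \<delta>1 \<le> \<bar>d + z\<bar>" by blast
  obtain \<delta>2 where d2: "\<delta>2 > 0" "\<forall>z\<in>\<int>. d + z \<noteq> 0 \<longrightarrow> \<delta>2 \<le> \<bar>d + z\<bar>" using int_sep1 by blast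
  show ?case
    apply (rule exI[of _ "min \<delta>1 \<delta>2"])
    using d1 d2 by force
qed

lemma subgroup_int_mult:
  assumes H: "real_add_subgroup H" and a: "a \<in> H"
  shows "of_int k * a \<in> H"
proof -
  have nat: "of_nat n * a \<in> H" for n :: nat
    by (induction n) (use H a in \<open>auto simp: real_add_subgroup_def distrib_right\<close>)
  show ?thesis
  proof (cases "k \<ge> 0")
    case True
    then show ?thesis using nat[of "nat k"] by simp
  next
    case False
    have "- (of_nat (nat (-k)) * a) \<in> H" using nat[of "nat (-k)"] H unfolding real_add_subgroup_def by blast
    then show ?thesis using False by simp
  qed
qed

lemma subgroup_sum:
  assumes H: "real_add_subgroup H" and "\<forall>i\<in>S. f i \<in> H"
  shows "sum f S \<in> H"
  using assms(2)
proof (induction S rule: infinite_finite_induct)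
  case (infinite A) then show ?case using H by (simp add: real_add_subgroup_def)
next
  case empty then show ?case using H by (simp add: real_add_subgroup_def)
next
  case (insert x F) then show ?case using H by (simp add: real_add_subgroup_def)
qed


lemma bs_periodic: "x \<in> bounded_span \<alpha> t N \<Longrightarrow> z \<in> \<int> \<Longrightarrow> x + z \<in> bounded_span \<alpha> t N"
proof -
  assume x: "x \<in> bounded_span \<alpha> t N" and z: "z \<in> \<int>"
  then obtain k where k: "\<forall>i\<in>{1..t}. \<bar>k i\<bar> \<le> int N" "x - (\<Sum>i=1..t. of_int (k i) * \<alpha> i) \<in> \<int>"
    unfolding bounded_span_def by blast
  have "x + z - (\<Sum>i=1..t. of_int (k i) * \<alpha> i) = (x - (\<Sum>i=1..t. of_int (k i) * \<alpha> i)) + z" by simp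
  also have "\<dots> \<in> \<int>" using k(2) z by (rule Ints_add)
  finally show ?thesis using k(1) unfolding bounded_span_def by blast
qed

lemma bs_mono: "N \<le> N' \<Longrightarrow> bounded_span \<alpha> t N \<subseteq> bounded_span \<alpha> (Suc t) N'"
proof
  fix x assume NN: "N \<le> N'" and x: "x \<in> bounded_span \<alpha> t N"
  then obtain k where k: "\<forall>i\<in>{1..t}. \<bar>k i\<bar> \<le> int N" "x - (\<Sum>i=1..t. of_int (k i) * \<alpha> i) \<in> \<int>"
    unfolding bounded_span_def by blast
  define k' where "k' = (\<lambda>i. if i \<le> t then k i else 0)"
  have "(\<Sum>i=1..Suc t. of_int (k' i) * \<alpha> i) = (\<Sum>i=1..t. of_int (k' i) * \<alpha> i)"
    by (simp add: k'_def)
  also have "\<dots> = (\<Sum>i=1..t. of_int (k i) * \<alpha> i)" by (rule sum.cong) (auto simp: k'_def)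
  finally have s: "(\<Sum>i=1..Suc t. of_int (k' i) * \<alpha> i) = (\<Sum>i=1..t. of_int (k i) * \<alpha> i)" .
  have "\<bar>k' i\<bar> \<le> int N'" if "i \<in> {1..Suc t}" for i
  proof (cases "i \<le> t")
    case True then have "\<bar>k i\<bar> \<le> int N" using k(1) that by simp
    then show ?thesis using NN True by (simp add: k'_def)
  qed (simp add: k'_def)
  then have "\<forall>i\<in>{1..Suc t}. \<bar>k' i\<bar> \<le> int N'" by blast
  then show "x \<in> bounded_span \<alpha> (Suc t) N'" unfolding bounded_span_def mem_Collect_eq
    by (intro exI[of _ k'] conjI) (simp_all only: s k(2))
qed

lemma bs_mono2: "N \<le> N' \<Longrightarrow> bounded_span \<alpha> t N \<subseteq> bounded_span \<alpha> t N'"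
proof
  fix x assume NN: "N \<le> N'" and x: "x \<in> bounded_span \<alpha> t N"
  then obtain k where k: "\<forall>i\<in>{1..t}. \<bar>k i\<bar> \<le> int N" "x - (\<Sum>i=1..t. of_int (k i) * \<alpha> i) \<in> \<int>"
    unfolding bounded_span_def by blast
  have "\<forall>i\<in>{1..t}. \<bar>k i\<bar> \<le> int N'" using k(1) NN of_nat_mono[OF NN] by (meson order_trans)
  then show "x \<in> bounded_span \<alpha> t N'" using k(2) unfolding bounded_span_def by blast
qed

lemma bs_alpha: "1 \<le> s \<Longrightarrow> s \<le> t \<Longrightarrow> 1 \<le> N \<Longrightarrow> \<alpha> s \<in> bounded_span \<alpha> t N"
proof -
  assume s: "1 \<le> s" "s \<le> t" and N: "1 \<le> N"
  define k :: "nat \<Rightarrow> int" where "k = (\<lambda>i. if i = s then 1 else 0)"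
  have "(\<Sum>i=1..t. of_int (k i) * \<alpha> i) = (\<Sum>i\<in>{1..t}. if i = s then \<alpha> i else 0)"
    by (rule sum.cong) (auto simp: k_def)
  also have "\<dots> = \<alpha> s" using s by (simp add: sum.delta)
  finally have "\<alpha> s - (\<Sum>i=1..t. of_int (k i) * \<alpha> i) \<in> \<int>" by simp
  moreover have "\<forall>i\<in>{1..t}. \<bar>k i\<bar> \<le> int N" using N by (auto simp: k_def)
  ultimately show ?thesis unfolding bounded_span_def by blast
qed

lemma bs_sub_G:
  assumes H: "real_add_subgroup (torus_set \<alpha>)"
  shows "bounded_span \<alpha> t N \<subseteq> torus_set \<alpha>"
proof
  fix x assume x: "x \<in> bounded_span \<alpha> t N"
  then obtain k where k: "x - (\<Sum>i=1..t. of_int (k i) * \<alpha> i) \<in> \<int>"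
    unfolding bounded_span_def by blast
  have ai: "\<alpha> i \<in> torus_set \<alpha>" if "i \<ge> 1" for i using that unfolding torus_set_def by force
  have "(\<Sum>i=1..t. of_int (k i) * \<alpha> i) \<in> torus_set \<alpha>"
    by (rule subgroup_sum[OF H]) (use subgroup_int_mult[OF H] ai in auto)
  then obtain s where s: "s \<ge> 1" "(\<Sum>i=1..t. of_int (k i) * \<alpha> i) - \<alpha> s \<in> \<int>"
    unfolding torus_set_def by blast
  have "x - \<alpha> s = (x - (\<Sum>i=1..t. of_int (k i) * \<alpha> i)) + ((\<Sum>i=1..t. of_int (k i) * \<alpha> i) - \<alpha> s)" by simp
  also have "\<dots> \<in> \<int>" using k s(2) by (rule Ints_add)
  finally show "x \<in> torus_set \<alpha>" using s(1) unfolding torus_set_def by blast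
qed

lemma bs_disc: "\<exists>\<delta>>0. \<forall>a\<in>bounded_span \<alpha> t N. \<forall>b\<in>bounded_span \<alpha> t N. \<bar>a - b\<bar> < \<delta> \<longrightarrow> a = b"
proof -
  define K where "K = PiE {1..t} (\<lambda>_. {-int N..int N})"
  define sm where "sm = (\<lambda>k::nat\<Rightarrow>int. \<Sum>i=1..t. of_int (k i) * \<alpha> i)"
  have fK: "finite K" unfolding K_def by (intro finite_PiE) auto
  define D where "D = (\<lambda>(k1,k2). sm k1 - sm k2) ` (K \<times> K)"
  have fD: "finite D" unfolding D_def using fK by simp
  obtain \<delta> where d: "\<delta> > 0" "\<forall>d\<in>D. \<forall>z\<in>\<int>. d + z \<noteq> 0 \<longrightarrow> \<delta> \<le> \<bar>d + z\<bar>"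
    using int_sep[OF fD] by blast
  have rep: "\<exists>k\<in>K. x - sm k \<in> \<int>" if "x \<in> bounded_span \<alpha> t N" for x
  proof -
    from that obtain k where k: "\<forall>i\<in>{1..t}. \<bar>k i\<bar> \<le> int N" "x - sm k \<in> \<int>"
      unfolding bounded_span_def sm_def by blast
    have "restrict k {1..t} \<in> K" using k(1) unfolding K_def by (auto simp: abs_le_iff)
    moreover have "sm (restrict k {1..t}) = sm k" unfolding sm_def by (rule sum.cong) auto
    ultimately show ?thesis using k(2) by (intro bexI[of _ "restrict k {1..t}"]) simp_all
  qed
  show ?thesis
  proof (intro exI[of _ \<delta>] conjI ballI impI)
    show "\<delta> > 0" by (rule d(1))
    fix a b assume a: "a \<in> bounded_span \<alpha> t N" and b: "b \<in> bounded_span \<alpha> t N" and ab: "\<bar>a - b\<bar> < \<delta>"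
    obtain k1 where k1: "k1 \<in> K" "a - sm k1 \<in> \<int>" using rep[OF a] by blast
    obtain k2 where k2: "k2 \<in> K" "b - sm k2 \<in> \<int>" using rep[OF b] by blast
    have dD: "sm k1 - sm k2 \<in> D" unfolding D_def using k1 k2 by force
    have zZ: "(a - sm k1) - (b - sm k2) \<in> \<int>" using k1(2) k2(2) by (rule Ints_diff)
    have eq: "a - b = (sm k1 - sm k2) + ((a - sm k1) - (b - sm k2))" by simp
    show "a = b"
    proof (rule ccontr)
      assume "a \<noteq> b"
      then have "(sm k1 - sm k2) + ((a - sm k1) - (b - sm k2)) \<noteq> 0" using eq by simp
      then have "\<delta> \<le> \<bar>(sm k1 - sm k2) + ((a - sm k1) - (b - sm k2))\<bar>" using d(2) dD zZ by blast
      then have "\<delta> \<le> \<bar>a - b\<bar>" by (simp only: eq)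
      then show False using ab by simp
    qed
  qed
qed


theorem lemma5:
  fixes \<alpha> :: "nat \<Rightarrow> real" and M :: "nat \<Rightarrow> nat"
  assumes "real_add_subgroup (torus_set \<alpha>)"
    and "\<forall>t\<ge>1. M t > 0"
  shows "\<exists>V :: nat \<Rightarrow> real set.
           (\<forall>t\<ge>1. open (V t) \<and> zperiodic (V t) \<and> bounded_span \<alpha> t (M t) \<subseteq> V t) \<and>
           (\<Union>k\<in>{1..}. \<Inter>t\<in>{k..}. V t) = torus_set \<alpha>"
proof -
  note H = assms(1)
  define N where "N t = (\<Sum>j\<le>t. M j)" for t
  define A where "A t = bounded_span \<alpha> t (N t)" for t
  have MN: "M t \<le> N t" for t unfolding N_def by (rule member_le_sum) auto
  have NN: "N j \<le> N t" if "j \<le> t" for j t unfolding N_def using that by (intro sum_mono2) auto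
  have Amono: "A t \<subseteq> A (Suc t)" for t unfolding A_def by (rule bs_mono) (rule NN, simp)
  have AG: "A t \<subseteq> torus_set \<alpha>" for t unfolding A_def by (rule bs_sub_G[OF H])
  have "\<forall>t. \<exists>d. d > 0 \<and> (\<forall>a\<in>A t. \<forall>b\<in>A t. \<bar>a - b\<bar> < d \<longrightarrow> a = b)"
    unfolding A_def using bs_disc by blast
  then obtain \<delta> where \<delta>: "\<And>t. \<delta> t > 0" "\<And>t. \<forall>a\<in>A t. \<forall>b\<in>A t. \<bar>a - b\<bar> < \<delta> t \<longrightarrow> a = b"
    by metis
  define r where "r t = min (\<delta> t) (min (\<delta> (Suc t)) 1) / (2 * (real t + 1))" for t
  have rpos: "r t > 0" for t unfolding r_def using \<delta>(1)[of t] \<delta>(1)[of "Suc t"] by simp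
  have r1: "r t \<le> \<delta> (Suc t) / 2" for t
  proof -
    have "r t \<le> min (\<delta> t) (min (\<delta> (Suc t)) 1) / 2" unfolding r_def
      using \<delta>(1)[of t] \<delta>(1)[of "Suc t"] by (intro divide_left_mono) auto
    then show ?thesis by linarith
  qed
  have r2: "r (Suc t) \<le> \<delta> (Suc t) / 2" for t
  proof -
    have "r (Suc t) \<le> min (\<delta> (Suc t)) (min (\<delta> (Suc (Suc t))) 1) / 2" unfolding r_def
      using \<delta>(1)[of "Suc t"] \<delta>(1)[of "Suc (Suc t)"] by (intro divide_left_mono) auto
    then show ?thesis by linarith
  qed
  have r3: "r t \<le> 1 / (real t + 1)" for t
  proof -
    have "r t \<le> 1 / (2 * (real t + 1))" unfolding r_def
      using \<delta>(1)[of t] \<delta>(1)[of "Suc t"] by (intro divide_right_mono) auto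
    also have "\<dots> \<le> 1 / (real t + 1)" by (intro divide_left_mono) auto
    finally show ?thesis .
  qed
  define V where "V t = (\<Union>a\<in>A t. ball a (r t))" for t
  have inV: "x \<in> V t \<longleftrightarrow> (\<exists>a\<in>A t. \<bar>x - a\<bar> < r t)" for x t
    unfolding V_def by (auto simp: dist_real_def abs_minus_commute)
  show ?thesis
  proof (intro exI[of _ V] conjI allI impI)
    fix t :: nat assume "t \<ge> 1"
    show "open (V t)" unfolding V_def by auto
    show "zperiodic (V t)" unfolding zperiodic_def
    proof (intro ballI)
      fix x n assume x: "x \<in> V t" and n: "(n::real) \<in> \<int>"
      then obtain a where a: "a \<in> A t" "\<bar>x - a\<bar> < r t" using inV by blast
      have "a + n \<in> A t" using bs_periodic a(1) n unfolding A_def by blast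
      moreover have "\<bar>(x + n) - (a + n)\<bar> < r t" using a(2) by simp
      ultimately show "x + n \<in> V t" using inV by blast
    qed
    show "bounded_span \<alpha> t (M t) \<subseteq> V t"
    proof
      fix x assume "x \<in> bounded_span \<alpha> t (M t)"
      then have "x \<in> A t" unfolding A_def using bs_mono2[OF MN] by blast
      then show "x \<in> V t" using inV rpos[of t] by force
    qed
  next
    show "(\<Union>k\<in>{1..}. \<Inter>t\<in>{k..}. V t) = torus_set \<alpha>"
    proof
      show "(\<Union>k\<in>{1..}. \<Inter>t\<in>{k..}. V t) \<subseteq> torus_set \<alpha>"
      proof
        fix x assume "x \<in> (\<Union>k\<in>{1..}. \<Inter>t\<in>{k..}. V t)"
        then obtain k where k: "\<forall>t\<ge>k. x \<in> V t" by auto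
        then have "\<forall>n. \<exists>a\<in>A (k + n). \<bar>x - a\<bar> < r (k + n)" using inV by auto
        then obtain a where a: "\<And>n. a n \<in> A (k + n)" "\<And>n. \<bar>x - a n\<bar> < r (k + n)" by metis
        have aeq: "a n = a 0" for n
        proof (induction n)
          case (Suc n)
          have "a n \<in> A (Suc (k + n))" using Amono a(1)[of n] by blast
          moreover have "a (Suc n) \<in> A (Suc (k + n))" using a(1)[of "Suc n"] by simp
          moreover have "\<bar>a n - a (Suc n)\<bar> < \<delta> (Suc (k + n))"
            using a(2)[of n] a(2)[of "Suc n"] r1[of "k + n"] r2[of "k + n"] by simp
          ultimately have "a n = a (Suc n)" using \<delta>(2) by blast
          then show ?case using Suc by simp
        qed simp
        have "x = a 0"
        proof (rule ccontr)
          assume "x \<noteq> a 0"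
          then have "\<bar>x - a 0\<bar> > 0" by simp
          then obtain n where n: "n > 0" "inverse (real n) < \<bar>x - a 0\<bar>"
            using ex_inverse_of_nat_less by blast
          have "\<bar>x - a 0\<bar> < r (k + n)" using a(2)[of n] aeq[of n] by simp
          also have "\<dots> \<le> 1 / (real (k + n) + 1)" by (rule r3)
          also have "\<dots> \<le> inverse (real n)"
            using n(1) by (simp add: inverse_eq_divide divide_left_mono)
          finally show False using n(2) by simp
        qed
        then show "x \<in> torus_set \<alpha>" using a(1)[of 0] AG by auto
      qed
    next
      show "torus_set \<alpha> \<subseteq> (\<Union>k\<in>{1..}. \<Inter>t\<in>{k..}. V t)"
      proof
        fix x assume "x \<in> torus_set \<alpha>"
        then obtain s where s: "s \<ge> 1" "x - \<alpha> s \<in> \<int>" unfolding torus_set_def by blast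
        have "x \<in> V t" if "t \<ge> s" for t
        proof -
          have "1 \<le> N t" using assms(2) s(1) MN[of s] NN[OF that] by (metis less_one not_le order_trans)
          then have "\<alpha> s \<in> A t" unfolding A_def using bs_alpha s(1) that by blast
          then have "\<alpha> s + (x - \<alpha> s) \<in> A t" unfolding A_def using bs_periodic s(2) by blast
          then have "x \<in> A t" by simp
          then show ?thesis using inV rpos[of t] by force
        qed
        then show "x \<in> (\<Union>k\<in>{1..}. \<Inter>t\<in>{k..}. V t)" using s(1) by blast
      qed
    qed
  qed
qed

end
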